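(* For every finite hypergraph $H$, $\mathrm{ch}_{um}(H)\le s(H)$.
   Context: For a hypergraph $H$ with hyperedge set $\mathcal E(H)$ (nonempty hyperedges), $s(H)$ is the minimum positive integer $s$ with $|\mathcal E(H)|\le s(s-1)/2$. A coloring $C\colon V\to\mathbb Z_{>0}$ is unique-maximum if in every hyperedge the maximum color is attained by exactly one vertex. The um-choice number $\mathrm{ch}_{um}(H)$ is the minimum $k$ such that for every family $\{L_v\}_{v\in V}$ of sets of positive integers with $|L_v|\ge k$ there is a unique-maximum coloring $C$ with $C(v)\in L_v$ for all $v$. *)

theory Defs
  imports Main
begin

definition finite_hypergraph :: "'a set \<Rightarrow> 'a set set \<Rightarrow> bool" where
  "finite_hypergraph V E \<longleftrightarrow> finite V \<and> (\<forall>e\<in>E. e \<noteq> {} \<and> e \<subseteq> V)"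

definition s_num :: "'a set set \<Rightarrow> nat" where
  "s_num E = (LEAST s::nat. 0 < s \<and> card E \<le> s * (s - 1) div 2)"

definition um_coloring :: "'a set \<Rightarrow> 'a set set \<Rightarrow> ('a \<Rightarrow> nat) \<Rightarrow> bool" where
  "um_coloring V E C \<longleftrightarrow> (\<forall>v\<in>V. 0 < C v) \<and>
     (\<forall>e\<in>E. \<exists>!v. v \<in> e \<and> C v = Max (C ` e))"

definition um_choosable :: "'a set \<Rightarrow> 'a set set \<Rightarrow> nat \<Rightarrow> bool" where
  "um_choosable V E k \<longleftrightarrow>
     (\<forall>L :: 'a \<Rightarrow> nat set.
        (\<forall>v\<in>V. L v \<subseteq> {0<..} \<and> (infinite (L v) \<or> k \<le> card (L v))) \<longrightarrow>
        (\<exists>C. um_coloring V E C \<and> (\<forall>v\<in>V. C v \<in> L v)))"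

definition ch_um :: "'a set \<Rightarrow> 'a set set \<Rightarrow> nat" where
  "ch_um V E = (LEAST k. um_choosable V E k)"

end

theory Submission
  imports Defs
begin

lemma um_equiv:
  assumes "finite e" "e \<noteq> {}"
  shows "(\<exists>!v. v \<in> e \<and> C v = Max (C ` e)) \<longleftrightarrow> (\<exists>v\<in>e. \<forall>w\<in>e. w \<noteq> v \<longrightarrow> C w < C v)"
proof
  assume "\<exists>!v. v \<in> e \<and> C v = Max (C ` e)"
  then obtain v where v: "v \<in> e" "C v = Max (C ` e)" and u: "\<And>w. w \<in> e \<and> C w = Max (C ` e) \<Longrightarrow> w = v" by blast
  have "\<forall>w\<in>e. w \<noteq> v \<longrightarrow> C w < C v"
  proof (intro ballI impI)
    fix w assume "w \<in> e" "w \<noteq> v"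
    then have "C w \<le> Max (C ` e)" using assms by simp
    moreover have "C w \<noteq> Max (C ` e)" using u \<open>w \<in> e\<close> \<open>w \<noteq> v\<close> by blast
    ultimately show "C w < C v" using v by simp
  qed
  then show "\<exists>v\<in>e. \<forall>w\<in>e. w \<noteq> v \<longrightarrow> C w < C v" using v by blast
next
  assume "\<exists>v\<in>e. \<forall>w\<in>e. w \<noteq> v \<longrightarrow> C w < C v"
  then obtain v where v: "v \<in> e" "\<forall>w\<in>e. w \<noteq> v \<longrightarrow> C w < C v" by blast
  have M: "Max (C ` e) = C v"
    using assms v by (intro Max_eqI) (auto simp: less_imp_le)
  show "\<exists>!v. v \<in> e \<and> C v = Max (C ` e)"
    using v M by (metis less_irrefl)
qed

lemma main:
  fixes L :: "'a \<Rightarrow> nat set"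
  assumes "finite V" "\<forall>e\<in>E. e \<noteq> {} \<and> e \<subseteq> V"
    "\<forall>v\<in>V. L v \<subseteq> {0<..} \<and> finite (L v) \<and> k \<le> card (L v)" "1 \<le> k"
    "card E \<le> k*(k-1) div 2"
  shows "\<exists>C. (\<forall>v\<in>V. C v \<in> L v) \<and> (\<forall>e\<in>E. \<exists>v\<in>e. \<forall>w\<in>e. w\<noteq>v \<longrightarrow> C w < C v)"
  using assms
proof (induction "card V" arbitrary: V E L k rule: less_induct)
  case less
  have finE: "finite E"
    by (rule finite_subset[of E "Pow V"]) (use less.prems in auto)
  show ?case
  proof (cases "V = {}")
    case True
    then have "E = {}" using less.prems(2) by blast
    then show ?thesis using True by auto
  next
    case False
    show ?thesis
    proof (cases "\<exists>u\<in>V. card {e\<in>E. u\<in>e} < k")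
      case True
      then obtain u where u: "u \<in> V" "card {e\<in>E. u\<in>e} < k" by blast
      define V' where "V' = V - {u}"
      define E' where "E' = (\<lambda>e. e - {u}) ` E - {{}}"
      have cV: "card V' < card V" unfolding V'_def by (rule card_Diff1_less[OF less.prems(1) u(1)])
      have "card E' \<le> card ((\<lambda>e. e - {u}) ` E)" unfolding E'_def
        using finE by (intro card_mono) auto
      also have "\<dots> \<le> card E" using finE by (rule card_image_le)
      finally have cE: "card E' \<le> k*(k-1) div 2" using less.prems(5) by simp
      have "\<exists>C. (\<forall>v\<in>V'. C v \<in> L v) \<and> (\<forall>e\<in>E'. \<exists>v\<in>e. \<forall>w\<in>e. w\<noteq>v \<longrightarrow> C w < C v)"
        apply (rule less.hyps[OF cV _ _ _ less.prems(4) cE])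
        using less.prems(1,2,3) unfolding V'_def E'_def by auto
      then obtain C' where C': "\<forall>v\<in>V'. C' v \<in> L v" "\<forall>e\<in>E'. \<exists>v\<in>e. \<forall>w\<in>e. w\<noteq>v \<longrightarrow> C' w < C' v"
        by blast
      define F where "F = (\<lambda>e. Max (C' ` (e - {u}))) ` {e\<in>E. u\<in>e}"
      have "card F \<le> card {e\<in>E. u\<in>e}" unfolding F_def using finE by (intro card_image_le) auto
      then have "card F < card (L u)" using u less.prems(3) by fastforce
      have fF: "finite F" unfolding F_def using finE by simp
      have "\<not> L u \<subseteq> F"
      proof
        assume "L u \<subseteq> F"
        then have "card (L u) \<le> card F" using fF by (rule card_mono[rotated])
        then show False using \<open>card F < card (L u)\<close> by simp
      qed
      then obtain x where x: "x \<in> L u" "x \<notin> F" by blast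
      define C where "C = C'(u := x)"
      have "\<forall>v\<in>V. C v \<in> L v" using C' x unfolding C_def V'_def by auto
      moreover have "\<forall>e\<in>E. \<exists>v\<in>e. \<forall>w\<in>e. w\<noteq>v \<longrightarrow> C w < C v"
      proof
        fix e assume eE: "e \<in> E"
        show "\<exists>v\<in>e. \<forall>w\<in>e. w\<noteq>v \<longrightarrow> C w < C v"
        proof (cases "u \<in> e")
          case False
          then have "e \<in> E'" unfolding E'_def using eE less.prems(2)
            by (auto intro!: image_eqI[where x=e])
          then obtain v where v: "v\<in>e" "\<forall>w\<in>e. w\<noteq>v \<longrightarrow> C' w < C' v" using C' by blast
          have "\<forall>w\<in>e. C w = C' w" using False unfolding C_def by auto
          then show ?thesis using v by metis
        next
          case True
          show ?thesis
          proof (cases "e = {u}")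
            case True then show ?thesis by auto
          next
            case False
            let ?e = "e - {u}"
            have ne: "?e \<noteq> {}" using False \<open>u \<in> e\<close> by blast
            have fe: "finite ?e" using eE less.prems(1,2) by (meson finite_Diff finite_subset)
            have "?e \<in> E'" unfolding E'_def using eE ne by auto
            then obtain v where v: "v\<in>?e" "\<forall>w\<in>?e. w\<noteq>v \<longrightarrow> C' w < C' v" using C' by blast
            have M: "Max (C' ` ?e) = C' v"
              using fe ne v by (intro Max_eqI) (auto simp: less_imp_le)
            have "Max (C' ` ?e) \<in> F" unfolding F_def using eE \<open>u \<in> e\<close> by auto
            then have xne: "x \<noteq> C' v" using x M by auto
            have Ce: "\<forall>w\<in>?e. C w = C' w" unfolding C_def by auto
            show ?thesis
            proof (cases "x < C' v")
              case True
              have "\<forall>w\<in>e. w\<noteq>v \<longrightarrow> C w < C v"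
                using v Ce True by (auto simp: C_def)
              then show ?thesis using v by blast
            next
              case False
              then have "C' v < x" using xne by simp
              have "\<forall>w\<in>e. w\<noteq>u \<longrightarrow> C w < C u"
              proof (intro ballI impI)
                fix w assume "w \<in> e" "w \<noteq> u"
                then have "C' w \<le> C' v" using v by (cases "w = v") (auto simp: less_imp_le)
                then show "C w < C u" using \<open>C' v < x\<close> \<open>w \<noteq> u\<close> by (simp add: C_def)
              qed
              then show ?thesis using \<open>u \<in> e\<close> by blast
            qed
          qed
        qed
      qed
      ultimately show ?thesis by blast
    next
      case nodeg: False
      then have deg: "\<forall>u\<in>V. k \<le> card {e\<in>E. u\<in>e}" by auto
      define W where "W = (\<Union>v\<in>V. L v)"
      have fW: "finite W" unfolding W_def using less.prems(1,3) by auto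
      obtain v0 where v0: "v0 \<in> V" using False by blast
      have "L v0 \<noteq> {}" using less.prems(3,4) v0 by fastforce
      then have Wne: "W \<noteq> {}" unfolding W_def using v0 by auto
      define c where "c = Max W"
      have "c \<in> W" unfolding c_def using fW Wne by simp
      then obtain u where u: "u \<in> V" "c \<in> L u" unfolding W_def by blast
      have cmax: "\<And>v y. v \<in> V \<Longrightarrow> y \<in> L v \<Longrightarrow> y \<le> c"
        unfolding c_def W_def using fW W_def by (auto intro: Max_ge)
      have dk: "k \<le> card {e\<in>E. u\<in>e}" using deg u by auto
      have k2: "2 \<le> k"
      proof (rule ccontr)
        assume "\<not> 2 \<le> k"
        then have "k = 1" using less.prems(4) by simp
        then have "E = {}" using less.prems(5) finE by simp
        then show False using dk \<open>k = 1\<close> by simp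
      qed
      define V' where "V' = V - {u}"
      define E' where "E' = {e\<in>E. u \<notin> e}"
      define L' where "L' = (\<lambda>v. L v - {c})"
      have cV: "card V' < card V" unfolding V'_def by (rule card_Diff1_less[OF less.prems(1) u(1)])
      have split: "card E = card E' + card {e\<in>E. u\<in>e}"
      proof -
        have "E = E' \<union> {e\<in>E. u\<in>e}" unfolding E'_def by auto
        moreover have "E' \<inter> {e\<in>E. u\<in>e} = {}" unfolding E'_def by auto
        moreover have "finite E'" "finite {e\<in>E. u\<in>e}" unfolding E'_def using finE by auto
        ultimately show ?thesis by (metis card_Un_disjoint)
      qed
      have arith: "k*(k-1) = (k-1)*(k-1-1) + 2*(k-1)"
      proof -
        obtain j where j: "k = j + 2" using k2 by (metis add.commute le_Suc_ex)
        show ?thesis unfolding j by (simp add: algebra_simps)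
      qed
      have "card E' \<le> (k-1)*(k-1-1) div 2"
        using split dk less.prems(5) arith by linarith
      then have cE: "card E' \<le> (k-1)*(k-1-1) div 2" .
      have "\<exists>C. (\<forall>v\<in>V'. C v \<in> L' v) \<and> (\<forall>e\<in>E'. \<exists>v\<in>e. \<forall>w\<in>e. w\<noteq>v \<longrightarrow> C w < C v)"
      proof (rule less.hyps[OF cV _ _ _ _ cE])
        show "finite V'" using less.prems(1) V'_def by simp
        show "\<forall>e\<in>E'. e \<noteq> {} \<and> e \<subseteq> V'" using less.prems(2) unfolding E'_def V'_def by auto
        show "1 \<le> k - 1" using k2 by simp
        show "\<forall>v\<in>V'. L' v \<subseteq> {0<..} \<and> finite (L' v) \<and> k - 1 \<le> card (L' v)"
        proof
          fix v assume "v \<in> V'"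
          then have "v \<in> V" unfolding V'_def by simp
          then have "L v \<subseteq> {0<..} \<and> finite (L v) \<and> k \<le> card (L v)" using less.prems(3) by blast
          moreover have "card (L v) - 1 \<le> card (L v - {c})" using diff_card_le_card_Diff[of "{c}" "L v"] by simp
          ultimately show "L' v \<subseteq> {0<..} \<and> finite (L' v) \<and> k - 1 \<le> card (L' v)"
            unfolding L'_def by auto
        qed
      qed
      then obtain C' where C': "\<forall>v\<in>V'. C' v \<in> L' v" "\<forall>e\<in>E'. \<exists>v\<in>e. \<forall>w\<in>e. w\<noteq>v \<longrightarrow> C' w < C' v"
        by blast
      define C where "C = C'(u := c)"
      have "\<forall>v\<in>V. C v \<in> L v" using C' u unfolding C_def V'_def L'_def by auto
      moreover have "\<forall>e\<in>E. \<exists>v\<in>e. \<forall>w\<in>e. w\<noteq>v \<longrightarrow> C w < C v"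
      proof
        fix e assume eE: "e \<in> E"
        show "\<exists>v\<in>e. \<forall>w\<in>e. w\<noteq>v \<longrightarrow> C w < C v"
        proof (cases "u \<in> e")
          case False
          then have "e \<in> E'" unfolding E'_def using eE by auto
          then obtain v where v: "v\<in>e" "\<forall>w\<in>e. w\<noteq>v \<longrightarrow> C' w < C' v" using C' by blast
          have "\<forall>w\<in>e. C w = C' w" using False unfolding C_def by auto
          then show ?thesis using v by metis
        next
          case True
          have "\<forall>w\<in>e. w\<noteq>u \<longrightarrow> C w < C u"
          proof (intro ballI impI)
            fix w assume w: "w \<in> e" "w \<noteq> u"
            then have wV: "w \<in> V'" using eE less.prems(2) unfolding V'_def by auto
            then have "C' w \<in> L w" "C' w \<noteq> c" using C' unfolding L'_def by auto
            moreover have "w \<in> V" using wV V'_def by simp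
            ultimately have "C' w < c" using cmax by (meson le_neq_implies_less)
            then show "C w < C u" using w by (simp add: C_def)
          qed
          then show ?thesis using True by blast
        qed
      qed
      ultimately show ?thesis by blast
    qed
  qed
qed

theorem corollary5p5:
  fixes V :: "'a set" and E :: "'a set set"
  assumes "finite_hypergraph V E"
  shows "ch_um V E \<le> s_num E"
proof -
  let ?P = "\<lambda>s::nat. 0 < s \<and> card E \<le> s * (s - 1) div 2"
  have ex: "?P (card E + 2)"
  proof -
    have "card E * 2 \<le> (card E + 2) * (card E + 1)" by (simp add: algebra_simps)
    then show ?thesis by simp
  qed
  have Ps: "?P (s_num E)" unfolding s_num_def by (rule LeastI[of ?P, OF ex])
  have fV: "finite V" and edges: "\<forall>e\<in>E. e \<noteq> {} \<and> e \<subseteq> V"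
    using assms unfolding finite_hypergraph_def by auto
  have "um_choosable V E (s_num E)"
    unfolding um_choosable_def
  proof (intro allI impI)
    fix L :: "'a \<Rightarrow> nat set"
    let ?k = "s_num E"
    assume L: "\<forall>v\<in>V. L v \<subseteq> {0<..} \<and> (infinite (L v) \<or> ?k \<le> card (L v))"
    have "\<forall>v\<in>V. \<exists>T. T \<subseteq> L v \<and> finite T \<and> card T = ?k"
    proof
      fix v assume "v \<in> V"
      then have "infinite (L v) \<or> ?k \<le> card (L v)" using L by blast
      then show "\<exists>T. T \<subseteq> L v \<and> finite T \<and> card T = ?k"
      proof
        assume "infinite (L v)"
        then show ?thesis using infinite_arbitrarily_large by blast
      next
        assume "?k \<le> card (L v)"
        then obtain T where "T \<subseteq> L v" "card T = ?k" using obtain_subset_with_card_n by metis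
        moreover have "finite T" using \<open>card T = ?k\<close> Ps by (metis card.infinite less_irrefl)
        ultimately show ?thesis by blast
      qed
    qed
    then obtain T where T: "\<forall>v\<in>V. T v \<subseteq> L v \<and> finite (T v) \<and> card (T v) = ?k" by metis
    have "\<exists>C. (\<forall>v\<in>V. C v \<in> T v) \<and> (\<forall>e\<in>E. \<exists>v\<in>e. \<forall>w\<in>e. w\<noteq>v \<longrightarrow> C w < C v)"
      apply (rule main[OF fV edges, where L=T and k="s_num E"])
      using T L Ps by auto
    then obtain C where C: "\<forall>v\<in>V. C v \<in> T v" "\<forall>e\<in>E. \<exists>v\<in>e. \<forall>w\<in>e. w\<noteq>v \<longrightarrow> C w < C v" by blast
    have "um_coloring V E C"
      unfolding um_coloring_def
    proof
      show "\<forall>v\<in>V. 0 < C v" using C T L by fastforce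
      show "\<forall>e\<in>E. \<exists>!v. v \<in> e \<and> C v = Max (C ` e)"
      proof
        fix e assume e: "e \<in> E"
        have "finite e" using e edges fV by (meson finite_subset)
        then show "\<exists>!v. v \<in> e \<and> C v = Max (C ` e)"
          using um_equiv[of e C] e edges C by blast
      qed
    qed
    then show "\<exists>C. um_coloring V E C \<and> (\<forall>v\<in>V. C v \<in> L v)" using C T by blast
  qed
  then show ?thesis unfolding ch_um_def by (rule Least_le)
qed

end
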